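(* Fix $k\ge0$. Let $\mathcal G$ be a discrete groupoid acting self-similarly on a finitely aligned $(k+1)$-graph $\Lambda$, let $\Gamma=d^{-1}(\mathbb N^k\times\{0\})\subseteq\Lambda$, and let $\sigma$ be a $\mathbb T$-valued $2$-cocycle on $\Lambda\bowtie\mathcal G$ (also denoted $\sigma$ when restricted to $\Gamma\bowtie\mathcal G$). There is a unique $*$-homomorphism $\Phi:\mathcal TC^*(\Gamma\bowtie\mathcal G,\sigma)\to\mathcal TC^*(\Lambda\bowtie\mathcal G,\sigma)$ with $\Phi(t^{\Gamma\bowtie\mathcal G}_{\gamma g})=t^{\Lambda\bowtie\mathcal G}_{\gamma g}$ for all $\gamma g\in\Gamma\bowtie\mathcal G$. If $\Lambda$ is locally convex, then $\Phi$ descends to a $*$-homomorphism $\overline\Phi:C^*(\Gamma\bowtie\mathcal G,\sigma)\to C^*(\Lambda\bowtie\mathcal G,\sigma)$ with $\overline\Phi(s^{\Gamma\bowtie\mathcal G}_{\gamma g})=s^{\Lambda\bowtie\mathcal G}_{\gamma g}$.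
   Context: Categories are small, identified with morphism sets; $\mathcal C^0$ objects, $r,s$ range/source, $\mathcal C^2$ composable pairs, $c\mathcal C=\{cc'\}$, $F\mathcal C=\bigcup_{c\in F}c\mathcal C$. Left-cancellative: $ab=ac\Rightarrow b=c$; finitely aligned: $a\mathcal C\cap b\mathcal C=F\mathcal C$ for some finite $F$; independent: $a\notin a'\mathcal C$ for distinct $a,a'\in F$; for $v\in\mathcal C^0$, $F\subseteq v\mathcal C$ is exhaustive if $c\mathcal C\cap F\mathcal C\ne\emptyset$ for all $c\in v\mathcal C$. A $(k+1)$-graph is a countable small category with $d:\Lambda\to\mathbb N^{k+1}$ with unique factorisation; locally convex: for $i\ne j$, if $e\in\Lambda^{e_i}$ and $r(e)\Lambda^{e_j}\ne\emptyset$ then $s(e)\Lambda^{e_j}\ne\emptyset$. A self-similar action of a discrete groupoid $\mathcal G$ on $\Lambda$ ($\mathcal G^0=\Lambda^0$) is a matched pair: left action $g\triangleright\lambda\in\Lambda$, right action $g\triangleleft\lambda\in\mathcal G$ ($s(g)=r(\lambda)$), with $s(g\triangleright\lambda)=r(g\triangleleft\lambda)$, $g\triangleright(\lambda\mu)=(g\triangleright\lambda)((g\triangleleft\lambda)\triangleright\mu)$, $(gh)\triangleleft\lambda=(g\triangleleft(h\triangleright\lambda))(h\triangleleft\lambda)$ and $d(g\triangleright\lambda)=d(\lambda)$; $\Lambda\bowtie\mathcal G$ has morphisms $\lambda g$ with $\lambda g\mu h=\lambda(g\triangleright\mu)(g\triangleleft\mu)h$; $\Gamma\bowtie\mathcal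 G$ is a subcategory. A $2$-cocycle: $\sigma:\mathcal C^2\to\mathbb T$ with $\sigma(c_2,c_3)\sigma(c_1,c_2c_3)=\sigma(c_1,c_2)\sigma(c_1c_2,c_3)$, $\sigma(r(c),c)=1=\sigma(c,s(c))$. A $\sigma$-twisted representation of a finitely aligned left-cancellative $\mathcal C$: partial isometries $S_c$ with (R1) $S_{c_1}S_{c_2}=\delta_{s(c_1),r(c_2)}\sigma(c_1,c_2)S_{c_1c_2}$, (R2) $S_c^*S_c=S_{s(c)}$, (R3) $S_{c_1}S_{c_1}^*S_{c_2}S_{c_2}^*=\bigvee_{c\in F}S_cS_c^*$ for finite independent $F$ with $c_1\mathcal C\cap c_2\mathcal C=F\mathcal C$ ($=0$ if empty; $\bigvee$ = supremum of commuting projections); it is covariant if also (R4) $S_v=\bigvee_{c\in F}S_cS_c^*$ for every $v$ and finite exhaustive $F\subseteq v\mathcal C$. $\mathcal TC^*(\mathcal C,\sigma)$ (resp. $C^*(\mathcal C,\sigma)$) is generated by a universal (resp. universal covariant) $\sigma$-twisted representation $t$ (resp. $s$). *)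

theory Defs
  imports "HOL-Analysis.Analysis"
begin

class cstar_algebra = real_normed_algebra + banach +
  fixes cscale :: "complex \<Rightarrow> 'a \<Rightarrow> 'a"
    and cadj :: "'a \<Rightarrow> 'a"
  assumes cscale_of_real: "cscale (complex_of_real r) x = scaleR r x"
    and cscale_add_right: "cscale a (x + y) = cscale a x + cscale a y"
    and cscale_add_left: "cscale (a + b) x = cscale a x + cscale b x"
    and cscale_mult: "cscale (a * b) x = cscale a (cscale b x)"
    and cscale_one: "cscale 1 x = x"
    and cscale_norm: "norm (cscale a x) = cmod a * norm x"
    and cscale_mult_left: "cscale a (x * y) = cscale a x * y"
    and cscale_mult_right: "cscale a (x * y) = x * cscale a y"
    and cadj_cadj: "cadj (cadj x) = x"
    and cadj_add: "cadj (x + y) = cadj x + cadj y"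
    and cadj_cscale: "cadj (cscale a x) = cscale (cnj a) (cadj x)"
    and cadj_mult: "cadj (x * y) = cadj y * cadj x"
    and cstar_identity: "norm (cadj x * x) = (norm x)\<^sup>2"

definition star_hom :: "('a::cstar_algebra \<Rightarrow> 'b::cstar_algebra) \<Rightarrow> bool" where
  "star_hom \<pi> \<longleftrightarrow>
     (\<forall>x y. \<pi> (x + y) = \<pi> x + \<pi> y) \<and>
     (\<forall>a x. \<pi> (cscale a x) = cscale a (\<pi> x)) \<and>
     (\<forall>x y. \<pi> (x * y) = \<pi> x * \<pi> y) \<and>
     (\<forall>x. \<pi> (cadj x) = cadj (\<pi> x))"

inductive_set star_alg_gen :: "'a::cstar_algebra set \<Rightarrow> 'a set" for X where
  gen: "x \<in> X \<Longrightarrow> x \<in> star_alg_gen X"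
| add: "x \<in> star_alg_gen X \<Longrightarrow> y \<in> star_alg_gen X \<Longrightarrow> x + y \<in> star_alg_gen X"
| mult: "x \<in> star_alg_gen X \<Longrightarrow> y \<in> star_alg_gen X \<Longrightarrow> x * y \<in> star_alg_gen X"
| scale: "x \<in> star_alg_gen X \<Longrightarrow> cscale a x \<in> star_alg_gen X"
| adj: "x \<in> star_alg_gen X \<Longrightarrow> cadj x \<in> star_alg_gen X"

definition generates :: "'a::cstar_algebra set \<Rightarrow> bool" where
  "generates X \<longleftrightarrow> closure (star_alg_gen X) = UNIV"

definition projection :: "'a::cstar_algebra \<Rightarrow> bool" where
  "projection p \<longleftrightarrow> cadj p = p \<and> p * p = p"

definition partial_isometry :: "'a::cstar_algebra \<Rightarrow> bool" where
  "partial_isometry v \<longleftrightarrow> v * cadj v * v = v"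

text \<open>q is the supremum of the set P of projections (order p \<le> q iff p q = p);
 the supremum of the empty set is 0.\<close>
definition is_proj_sup :: "'a::cstar_algebra set \<Rightarrow> 'a \<Rightarrow> bool" where
  "is_proj_sup P q \<longleftrightarrow> projection q \<and> (\<forall>p\<in>P. p * q = p) \<and>
     (\<forall>r. projection r \<and> (\<forall>p\<in>P. p * r = p) \<longrightarrow> q * r = q)"

record ('o, 'm) cat =
  cat_mor :: "'m set"
  cat_obj :: "'o set"
  cat_r :: "'m \<Rightarrow> 'o"
  cat_s :: "'m \<Rightarrow> 'o"
  cat_comp :: "'m \<Rightarrow> 'm \<Rightarrow> 'm"
  cat_id :: "'o \<Rightarrow> 'm"

definition is_category :: "('o, 'm) cat \<Rightarrow> bool" where
  "is_category C \<longleftrightarrow>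
     (\<forall>v\<in>cat_obj C. cat_id C v \<in> cat_mor C \<and> cat_r C (cat_id C v) = v \<and> cat_s C (cat_id C v) = v) \<and>
     (\<forall>c\<in>cat_mor C. cat_r C c \<in> cat_obj C \<and> cat_s C c \<in> cat_obj C) \<and>
     (\<forall>a\<in>cat_mor C. \<forall>b\<in>cat_mor C. cat_s C a = cat_r C b \<longrightarrow>
        cat_comp C a b \<in> cat_mor C \<and> cat_r C (cat_comp C a b) = cat_r C a \<and>
        cat_s C (cat_comp C a b) = cat_s C b) \<and>
     (\<forall>a\<in>cat_mor C. \<forall>b\<in>cat_mor C. \<forall>c\<in>cat_mor C. cat_s C a = cat_r C b \<longrightarrow> cat_s C b = cat_r C c \<longrightarrow>
        cat_comp C (cat_comp C a b) c = cat_comp C a (cat_comp C b c)) \<and>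
     (\<forall>c\<in>cat_mor C. cat_comp C (cat_id C (cat_r C c)) c = c \<and> cat_comp C c (cat_id C (cat_s C c)) = c)"

definition is_groupoid :: "('o, 'm) cat \<Rightarrow> bool" where
  "is_groupoid G \<longleftrightarrow> is_category G \<and>
     (\<forall>g\<in>cat_mor G. \<exists>h\<in>cat_mor G. cat_s G g = cat_r G h \<and> cat_s G h = cat_r G g \<and>
        cat_comp G g h = cat_id G (cat_r G g) \<and> cat_comp G h g = cat_id G (cat_s G g))"

definition right_ideal :: "('o, 'm) cat \<Rightarrow> 'm \<Rightarrow> 'm set" where
  "right_ideal C c = {cat_comp C c c' | c'. c' \<in> cat_mor C \<and> cat_s C c = cat_r C c'}"

definition set_ideal :: "('o, 'm) cat \<Rightarrow> 'm set \<Rightarrow> 'm set" where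
  "set_ideal C F = (\<Union>c\<in>F. right_ideal C c)"

definition left_cancellative :: "('o, 'm) cat \<Rightarrow> bool" where
  "left_cancellative C \<longleftrightarrow> (\<forall>a\<in>cat_mor C. \<forall>b\<in>cat_mor C. \<forall>c\<in>cat_mor C.
     cat_s C a = cat_r C b \<longrightarrow> cat_s C a = cat_r C c \<longrightarrow> cat_comp C a b = cat_comp C a c \<longrightarrow> b = c)"

definition finitely_aligned :: "('o, 'm) cat \<Rightarrow> bool" where
  "finitely_aligned C \<longleftrightarrow> (\<forall>a\<in>cat_mor C. \<forall>b\<in>cat_mor C. \<exists>F. finite F \<and> F \<subseteq> cat_mor C \<and>
     right_ideal C a \<inter> right_ideal C b = set_ideal C F)"

definition independent :: "('o, 'm) cat \<Rightarrow> 'm set \<Rightarrow> bool" where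
  "independent C F \<longleftrightarrow> (\<forall>a\<in>F. \<forall>a'\<in>F. a \<noteq> a' \<longrightarrow> a \<notin> right_ideal C a')"

definition exhaustive :: "('o, 'm) cat \<Rightarrow> 'o \<Rightarrow> 'm set \<Rightarrow> bool" where
  "exhaustive C v F \<longleftrightarrow> F \<subseteq> right_ideal C (cat_id C v) \<and>
     (\<forall>c\<in>right_ideal C (cat_id C v). right_ideal C c \<inter> set_ideal C F \<noteq> {})"

definition two_cocycle :: "('o, 'm) cat \<Rightarrow> ('m \<Rightarrow> 'm \<Rightarrow> complex) \<Rightarrow> bool" where
  "two_cocycle C \<sigma> \<longleftrightarrow>
     (\<forall>a\<in>cat_mor C. \<forall>b\<in>cat_mor C. cat_s C a = cat_r C b \<longrightarrow> cmod (\<sigma> a b) = 1) \<and>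
     (\<forall>a\<in>cat_mor C. \<forall>b\<in>cat_mor C. \<forall>c\<in>cat_mor C. cat_s C a = cat_r C b \<longrightarrow> cat_s C b = cat_r C c \<longrightarrow>
        \<sigma> b c * \<sigma> a (cat_comp C b c) = \<sigma> a b * \<sigma> (cat_comp C a b) c) \<and>
     (\<forall>c\<in>cat_mor C. \<sigma> (cat_id C (cat_r C c)) c = 1 \<and> \<sigma> c (cat_id C (cat_s C c)) = 1)"

definition twisted_rep :: "('o, 'm) cat \<Rightarrow> ('m \<Rightarrow> 'm \<Rightarrow> complex) \<Rightarrow> ('m \<Rightarrow> 'a::cstar_algebra) \<Rightarrow> bool" where
  "twisted_rep C \<sigma> S \<longleftrightarrow>
     (\<forall>c\<in>cat_mor C. partial_isometry (S c)) \<and>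
     (\<forall>c1\<in>cat_mor C. \<forall>c2\<in>cat_mor C. S c1 * S c2 =
        (if cat_s C c1 = cat_r C c2 then cscale (\<sigma> c1 c2) (S (cat_comp C c1 c2)) else 0)) \<and>
     (\<forall>c\<in>cat_mor C. cadj (S c) * S c = S (cat_id C (cat_s C c))) \<and>
     (\<forall>c1\<in>cat_mor C. \<forall>c2\<in>cat_mor C. \<forall>F. finite F \<longrightarrow> F \<subseteq> cat_mor C \<longrightarrow> independent C F \<longrightarrow>
        right_ideal C c1 \<inter> right_ideal C c2 = set_ideal C F \<longrightarrow>
        is_proj_sup {S c * cadj (S c) | c. c \<in> F} (S c1 * cadj (S c1) * S c2 * cadj (S c2)))"

definition covariant_twisted_rep :: "('o, 'm) cat \<Rightarrow> ('m \<Rightarrow> 'm \<Rightarrow> complex) \<Rightarrow> ('m \<Rightarrow> 'a::cstar_algebra) \<Rightarrow> bool" where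
  "covariant_twisted_rep C \<sigma> S \<longleftrightarrow> twisted_rep C \<sigma> S \<and>
     (\<forall>v\<in>cat_obj C. \<forall>F. finite F \<longrightarrow> exhaustive C v F \<longrightarrow>
        is_proj_sup {S c * cadj (S c) | c. c \<in> F} (S (cat_id C v)))"

text \<open>(A, t) with A the whole type 'a is a universal sigma-twisted representation, i.e.
 A is the twisted Toeplitz algebra TC*(C, sigma) with generators t. Universality is expressed
 relative to target C*-algebras of the type 'b (HOL cannot quantify over types).\<close>
definition universal_toeplitz ::
  "'b::cstar_algebra itself \<Rightarrow> ('o, 'm) cat \<Rightarrow> ('m \<Rightarrow> 'm \<Rightarrow> complex) \<Rightarrow> ('m \<Rightarrow> 'a::cstar_algebra) \<Rightarrow> bool" where
  "universal_toeplitz _ C \<sigma> t \<longleftrightarrow> twisted_rep C \<sigma> t \<and> generates (t ` cat_mor C) \<and>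
     (\<forall>S :: 'm \<Rightarrow> 'b. twisted_rep C \<sigma> S \<longrightarrow>
        (\<exists>!\<pi> :: 'a \<Rightarrow> 'b. star_hom \<pi> \<and> (\<forall>c\<in>cat_mor C. \<pi> (t c) = S c)))"

text \<open>Same for the Cuntz--Krieger type algebra C*(C, sigma) with covariant generators s.\<close>
definition universal_covariant ::
  "'b::cstar_algebra itself \<Rightarrow> ('o, 'm) cat \<Rightarrow> ('m \<Rightarrow> 'm \<Rightarrow> complex) \<Rightarrow> ('m \<Rightarrow> 'a::cstar_algebra) \<Rightarrow> bool" where
  "universal_covariant _ C \<sigma> s \<longleftrightarrow> covariant_twisted_rep C \<sigma> s \<and> generates (s ` cat_mor C) \<and>
     (\<forall>S :: 'm \<Rightarrow> 'b. covariant_twisted_rep C \<sigma> S \<longrightarrow>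
        (\<exists>!\<pi> :: 'a \<Rightarrow> 'b. star_hom \<pi> \<and> (\<forall>c\<in>cat_mor C. \<pi> (s c) = S c)))"

text \<open>An n-graph (here n = k+1): degrees are elements of N^n, encoded as functions
 nat => nat vanishing at indices \<ge> n.\<close>
definition is_kgraph :: "nat \<Rightarrow> ('o, 'l) cat \<Rightarrow> ('l \<Rightarrow> nat \<Rightarrow> nat) \<Rightarrow> bool" where
  "is_kgraph n \<Lambda> d \<longleftrightarrow> is_category \<Lambda> \<and> countable (cat_mor \<Lambda>) \<and>
     (\<forall>lam\<in>cat_mor \<Lambda>. \<forall>i\<ge>n. d lam i = 0) \<and>
     (\<forall>lam\<in>cat_mor \<Lambda>. \<forall>\<mu>\<in>cat_mor \<Lambda>. cat_s \<Lambda> lam = cat_r \<Lambda> \<mu> \<longrightarrow>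
        d (cat_comp \<Lambda> lam \<mu>) = (\<lambda>i. d lam i + d \<mu> i)) \<and>
     (\<forall>lam\<in>cat_mor \<Lambda>. \<forall>m p. d lam = (\<lambda>i. m i + p i) \<longrightarrow>
        (\<exists>!x. fst x \<in> cat_mor \<Lambda> \<and> snd x \<in> cat_mor \<Lambda> \<and> cat_s \<Lambda> (fst x) = cat_r \<Lambda> (snd x) \<and>
              d (fst x) = m \<and> d (snd x) = p \<and> cat_comp \<Lambda> (fst x) (snd x) = lam))"

definition unit_deg :: "nat \<Rightarrow> nat \<Rightarrow> nat" where
  "unit_deg i = (\<lambda>l. if l = i then 1 else 0)"

definition locally_convex :: "nat \<Rightarrow> ('o, 'l) cat \<Rightarrow> ('l \<Rightarrow> nat \<Rightarrow> nat) \<Rightarrow> bool" where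
  "locally_convex n \<Lambda> d \<longleftrightarrow> (\<forall>i<n. \<forall>j<n. i \<noteq> j \<longrightarrow>
     (\<forall>e\<in>cat_mor \<Lambda>. d e = unit_deg i \<longrightarrow>
        (\<exists>f\<in>cat_mor \<Lambda>. cat_r \<Lambda> f = cat_r \<Lambda> e \<and> d f = unit_deg j) \<longrightarrow>
        (\<exists>f\<in>cat_mor \<Lambda>. cat_r \<Lambda> f = cat_s \<Lambda> e \<and> d f = unit_deg j)))"

text \<open>Self-similar action of the groupoid G on \<Lambda> (G^0 = \<Lambda>^0): a matched pair consisting of a
 left action act g lam = g \<triangleright> lam of G on \<Lambda> and a right action res g lam = g \<triangleleft> lam of \<Lambda> on G,
 both defined when s(g) = r(lam).\<close>
definition self_similar :: "('o, 'l) cat \<Rightarrow> ('o, 'g) cat \<Rightarrow> ('l \<Rightarrow> nat \<Rightarrow> nat) \<Rightarrow>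
    ('g \<Rightarrow> 'l \<Rightarrow> 'l) \<Rightarrow> ('g \<Rightarrow> 'l \<Rightarrow> 'g) \<Rightarrow> bool" where
  "self_similar \<Lambda> G d act res \<longleftrightarrow>
     (\<forall>g\<in>cat_mor G. \<forall>lam\<in>cat_mor \<Lambda>. cat_s G g = cat_r \<Lambda> lam \<longrightarrow>
        act g lam \<in> cat_mor \<Lambda> \<and> res g lam \<in> cat_mor G \<and>
        cat_r \<Lambda> (act g lam) = cat_r G g \<and>
        cat_s \<Lambda> (act g lam) = cat_r G (res g lam) \<and>
        cat_s G (res g lam) = cat_s \<Lambda> lam \<and>
        d (act g lam) = d lam) \<and>
     (\<forall>lam\<in>cat_mor \<Lambda>. act (cat_id G (cat_r \<Lambda> lam)) lam = lam) \<and>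
     (\<forall>g\<in>cat_mor G. res g (cat_id \<Lambda> (cat_s G g)) = g) \<and>
     (\<forall>g\<in>cat_mor G. \<forall>h\<in>cat_mor G. \<forall>lam\<in>cat_mor \<Lambda>. cat_s G g = cat_r G h \<longrightarrow> cat_s G h = cat_r \<Lambda> lam \<longrightarrow>
        act (cat_comp G g h) lam = act g (act h lam) \<and>
        res (cat_comp G g h) lam = cat_comp G (res g (act h lam)) (res h lam)) \<and>
     (\<forall>g\<in>cat_mor G. \<forall>lam\<in>cat_mor \<Lambda>. \<forall>\<mu>\<in>cat_mor \<Lambda>. cat_s G g = cat_r \<Lambda> lam \<longrightarrow> cat_s \<Lambda> lam = cat_r \<Lambda> \<mu> \<longrightarrow>
        act g (cat_comp \<Lambda> lam \<mu>) = cat_comp \<Lambda> (act g lam) (act (res g lam) \<mu>) \<and>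
        res g (cat_comp \<Lambda> lam \<mu>) = res (res g lam) \<mu>)"

text \<open>Zappa--Szep product X \<bowtie> G for a subset X of \<Lambda> (X = \<Lambda> or X = \<Gamma>); a morphism lam g is
 the pair (lam, g) with s(lam) = r(g).\<close>
definition zs_product :: "('o, 'l) cat \<Rightarrow> ('o, 'g) cat \<Rightarrow> ('g \<Rightarrow> 'l \<Rightarrow> 'l) \<Rightarrow> ('g \<Rightarrow> 'l \<Rightarrow> 'g) \<Rightarrow>
    'l set \<Rightarrow> ('o, 'l \<times> 'g) cat" where
  "zs_product \<Lambda> G act res X =
     \<lparr> cat_mor = {(lam, g). lam \<in> X \<and> g \<in> cat_mor G \<and> cat_s \<Lambda> lam = cat_r G g},
       cat_obj = cat_obj \<Lambda>,
       cat_r = (\<lambda>(lam, g). cat_r \<Lambda> lam),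
       cat_s = (\<lambda>(lam, g). cat_s G g),
       cat_comp = (\<lambda>(lam, g) (\<mu>, h). (cat_comp \<Lambda> lam (act g \<mu>), cat_comp G (res g \<mu>) h)),
       cat_id = (\<lambda>v. (cat_id \<Lambda> v, cat_id G v)) \<rparr>"

definition gamma_part :: "nat \<Rightarrow> ('o, 'l) cat \<Rightarrow> ('l \<Rightarrow> nat \<Rightarrow> nat) \<Rightarrow> 'l set" where
  "gamma_part k \<Lambda> d = {lam\<in>cat_mor \<Lambda>. d lam k = 0}"

end

theory Submission
  imports Defs
begin

locale ssg =
  fixes k :: nat and \<Lambda> :: "('o, 'l) cat" and d :: "'l \<Rightarrow> nat \<Rightarrow> nat"
    and G :: "('o, 'g) cat" and act :: "'g \<Rightarrow> 'l \<Rightarrow> 'l" and res :: "'g \<Rightarrow> 'l \<Rightarrow> 'g"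
  assumes kgraph: "is_kgraph (Suc k) \<Lambda> d"
    and grpd: "is_groupoid G"
    and objs: "cat_obj G = cat_obj \<Lambda>"
    and ss: "self_similar \<Lambda> G d act res"
begin

abbreviation "L \<equiv> cat_mor \<Lambda>"
abbreviation "r \<equiv> cat_r \<Lambda>"
abbreviation "s \<equiv> cat_s \<Lambda>"
abbreviation "cp \<equiv> cat_comp \<Lambda>"
abbreviation "iL \<equiv> cat_id \<Lambda>"
abbreviation "Gm \<equiv> cat_mor G"
abbreviation "rG \<equiv> cat_r G"
abbreviation "sG \<equiv> cat_s G"
abbreviation "cG \<equiv> cat_comp G"
abbreviation "iG \<equiv> cat_id G"

lemma catL: "is_category \<Lambda>" using kgraph by (simp add: is_kgraph_def)
lemma catG: "is_category G" using grpd by (simp add: is_groupoid_def)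

lemma L_id: "v \<in> cat_obj \<Lambda> \<Longrightarrow> iL v \<in> L \<and> r (iL v) = v \<and> s (iL v) = v"
  using catL by (simp add: is_category_def)
lemma L_rs: "a \<in> L \<Longrightarrow> r a \<in> cat_obj \<Lambda> \<and> s a \<in> cat_obj \<Lambda>"
  using catL by (simp add: is_category_def)
lemma L_comp: "a \<in> L \<Longrightarrow> b \<in> L \<Longrightarrow> s a = r b \<Longrightarrow> cp a b \<in> L \<and> r (cp a b) = r a \<and> s (cp a b) = s b"
  using catL unfolding is_category_def by simp
lemma L_assoc: "a \<in> L \<Longrightarrow> b \<in> L \<Longrightarrow> c \<in> L \<Longrightarrow> s a = r b \<Longrightarrow> s b = r c \<Longrightarrow> cp (cp a b) c = cp a (cp b c)"
  using catL unfolding is_category_def by simp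
lemma L_unit: "c \<in> L \<Longrightarrow> cp (iL (r c)) c = c \<and> cp c (iL (s c)) = c"
  using catL unfolding is_category_def by simp

lemma G_id: "v \<in> cat_obj G \<Longrightarrow> iG v \<in> Gm \<and> rG (iG v) = v \<and> sG (iG v) = v"
  using catG by (simp add: is_category_def)
lemma G_rs: "a \<in> Gm \<Longrightarrow> rG a \<in> cat_obj G \<and> sG a \<in> cat_obj G"
  using catG by (simp add: is_category_def)
lemma G_comp: "a \<in> Gm \<Longrightarrow> b \<in> Gm \<Longrightarrow> sG a = rG b \<Longrightarrow> cG a b \<in> Gm \<and> rG (cG a b) = rG a \<and> sG (cG a b) = sG b"
  using catG unfolding is_category_def by simp
lemma G_assoc: "a \<in> Gm \<Longrightarrow> b \<in> Gm \<Longrightarrow> c \<in> Gm \<Longrightarrow> sG a = rG b \<Longrightarrow> sG b = rG c \<Longrightarrow> cG (cG a b) c = cG a (cG b c)"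
  using catG unfolding is_category_def by simp
lemma G_unit: "c \<in> Gm \<Longrightarrow> cG (iG (rG c)) c = c \<and> cG c (iG (sG c)) = c"
  using catG unfolding is_category_def by simp
lemma G_inv: "g \<in> Gm \<Longrightarrow> \<exists>h\<in>Gm. sG g = rG h \<and> sG h = rG g \<and> cG g h = iG (rG g) \<and> cG h g = iG (sG g)"
  using grpd unfolding is_groupoid_def by blast

lemma d_high: "a \<in> L \<Longrightarrow> i \<ge> Suc k \<Longrightarrow> d a i = 0"
  using kgraph unfolding is_kgraph_def by simp
lemma d_comp: "a \<in> L \<Longrightarrow> b \<in> L \<Longrightarrow> s a = r b \<Longrightarrow> d (cp a b) = (\<lambda>i. d a i + d b i)"
  using kgraph unfolding is_kgraph_def by simp
lemma kg_fact: "\<forall>lam\<in>L. \<forall>m p. d lam = (\<lambda>i. m i + p i) \<longrightarrow>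
        (\<exists>!x. fst x \<in> L \<and> snd x \<in> L \<and> s (fst x) = r (snd x) \<and>
              d (fst x) = m \<and> d (snd x) = p \<and> cp (fst x) (snd x) = lam)"
  using kgraph unfolding is_kgraph_def by (elim conjE) assumption

lemma fact_ex: "lam \<in> L \<Longrightarrow> d lam = (\<lambda>i. m i + p i) \<Longrightarrow>
   \<exists>a b. a \<in> L \<and> b \<in> L \<and> s a = r b \<and> d a = m \<and> d b = p \<and> cp a b = lam"
proof -
  assume A: "lam \<in> L" "d lam = (\<lambda>i. m i + p i)"
  have "\<exists>!x. fst x \<in> L \<and> snd x \<in> L \<and> s (fst x) = r (snd x) \<and> d (fst x) = m \<and> d (snd x) = p \<and> cp (fst x) (snd x) = lam"
    using kg_fact A by blast
  then obtain x where "fst x \<in> L \<and> snd x \<in> L \<and> s (fst x) = r (snd x) \<and> d (fst x) = m \<and> d (snd x) = p \<and> cp (fst x) (snd x) = lam"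
    by (rule ex1E) 
  then show ?thesis by blast
qed
lemma fact_uniq: "lam \<in> L \<Longrightarrow> d lam = (\<lambda>i. m i + p i) \<Longrightarrow>
   a \<in> L \<Longrightarrow> b \<in> L \<Longrightarrow> s a = r b \<Longrightarrow> d a = m \<Longrightarrow> d b = p \<Longrightarrow> cp a b = lam \<Longrightarrow>
   a' \<in> L \<Longrightarrow> b' \<in> L \<Longrightarrow> s a' = r b' \<Longrightarrow> d a' = m \<Longrightarrow> d b' = p \<Longrightarrow> cp a' b' = lam \<Longrightarrow>
   a = a' \<and> b = b'"
proof -
  assume A: "lam \<in> L" "d lam = (\<lambda>i. m i + p i)"
    "a \<in> L" "b \<in> L" "s a = r b" "d a = m" "d b = p" "cp a b = lam"
    "a' \<in> L" "b' \<in> L" "s a' = r b'" "d a' = m" "d b' = p" "cp a' b' = lam"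
  have U: "\<exists>!x. fst x \<in> L \<and> snd x \<in> L \<and> s (fst x) = r (snd x) \<and> d (fst x) = m \<and> d (snd x) = p \<and> cp (fst x) (snd x) = lam"
    using kg_fact A(1,2) by blast
  from U obtain x where uq: "\<And>y. fst y \<in> L \<and> snd y \<in> L \<and> s (fst y) = r (snd y) \<and> d (fst y) = m \<and> d (snd y) = p \<and> cp (fst y) (snd y) = lam \<Longrightarrow> y = x"
    by (elim ex1E) blast
  have "(a,b) = x" by (rule uq) (use A in simp)
  moreover have "(a',b') = x" by (rule uq) (use A in simp)
  ultimately have "(a,b) = (a',b')" by simp
  then show ?thesis by simp
qed

lemma d_id: "v \<in> cat_obj \<Lambda> \<Longrightarrow> d (iL v) = (\<lambda>i. 0)"
proof -
  assume v: "v \<in> cat_obj \<Lambda>"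
  have "d (cp (iL v) (iL v)) = (\<lambda>i. d (iL v) i + d (iL v) i)" using L_id[OF v] d_comp by auto
  moreover have "cp (iL v) (iL v) = iL v" using L_unit[of "iL v"] L_id[OF v] by auto
  ultimately have "\<And>i. d (iL v) i = d (iL v) i + d (iL v) i" by metis
  then show ?thesis by auto  
qed


lemma ss1: "g \<in> Gm \<Longrightarrow> lam \<in> L \<Longrightarrow> sG g = r lam \<Longrightarrow>
        act g lam \<in> L \<and> res g lam \<in> Gm \<and>
        r (act g lam) = rG g \<and>
        s (act g lam) = rG (res g lam) \<and>
        sG (res g lam) = s lam \<and>
        d (act g lam) = d lam"
  using ss unfolding self_similar_def by simp
lemma ss2: "lam \<in> L \<Longrightarrow> act (iG (r lam)) lam = lam"
  using ss unfolding self_similar_def by simp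
lemma ss4: "g \<in> Gm \<Longrightarrow> h \<in> Gm \<Longrightarrow> lam \<in> L \<Longrightarrow> sG g = rG h \<Longrightarrow> sG h = r lam \<Longrightarrow>
        act (cG g h) lam = act g (act h lam) \<and>
        res (cG g h) lam = cG (res g (act h lam)) (res h lam)"
  using ss unfolding self_similar_def by simp
lemma ss5: "g \<in> Gm \<Longrightarrow> lam \<in> L \<Longrightarrow> mu \<in> L \<Longrightarrow> sG g = r lam \<Longrightarrow> s lam = r mu \<Longrightarrow>
        act g (cp lam mu) = cp (act g lam) (act (res g lam) mu) \<and>
        res g (cp lam mu) = res (res g lam) mu"
  using ss unfolding self_similar_def by simp

abbreviation "Z X \<equiv> zs_product \<Lambda> G act res X"

lemma Z_mor: "cat_mor (Z X) = {(lam, g). lam \<in> X \<and> g \<in> Gm \<and> s lam = rG g}"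
  by (simp add: zs_product_def)
lemma Z_r[simp]: "cat_r (Z X) (lam, g) = r lam" by (simp add: zs_product_def)
lemma Z_s[simp]: "cat_s (Z X) (lam, g) = sG g" by (simp add: zs_product_def)
lemma Z_comp[simp]: "cat_comp (Z X) (lam, g) (mu, h) = (cp lam (act g mu), cG (res g mu) h)"
  by (simp add: zs_product_def)
lemma Z_id[simp]: "cat_id (Z X) v = (iL v, iG v)" by (simp add: zs_product_def)
lemma Z_obj[simp]: "cat_obj (Z X) = cat_obj \<Lambda>" by (simp add: zs_product_def)

definition closedX :: "'l set \<Rightarrow> bool" where
  "closedX X \<longleftrightarrow> X \<subseteq> L \<and> (\<forall>g x. g \<in> Gm \<longrightarrow> x \<in> X \<longrightarrow> sG g = r x \<longrightarrow> act g x \<in> X) \<and>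
     (\<forall>a b. a \<in> X \<longrightarrow> b \<in> X \<longrightarrow> s a = r b \<longrightarrow> cp a b \<in> X)"

lemma char_ideal:
  assumes X: "closedX X" and c1: "(gam, g1) \<in> cat_mor (Z X)"
  shows "right_ideal (Z X) (gam, g1) =
     {(lam, g). (lam, g) \<in> cat_mor (Z X) \<and> (\<exists>mu\<in>X. s gam = r mu \<and> lam = cp gam mu)}"
proof (rule set_eqI, rule iffI)
  have XL: "X \<subseteq> L" using X by (simp add: closedX_def)
  have Xact: "\<And>g x. g \<in> Gm \<Longrightarrow> x \<in> X \<Longrightarrow> sG g = r x \<Longrightarrow> act g x \<in> X" using X by (simp add: closedX_def)
  have Xcp: "\<And>a b. a \<in> X \<Longrightarrow> b \<in> X \<Longrightarrow> s a = r b \<Longrightarrow> cp a b \<in> X" using X by (simp add: closedX_def)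
  from c1 have gX: "gam \<in> X" and g1: "g1 \<in> Gm" "s gam = rG g1" by (auto simp: Z_mor)
  fix z
  {
    assume "z \<in> right_ideal (Z X) (gam, g1)"
    then obtain mu' h where mh: "(mu', h) \<in> cat_mor (Z X)" "sG g1 = r mu'" and z: "z = cat_comp (Z X) (gam, g1) (mu', h)"
      unfolding right_ideal_def by auto
    from mh have m': "mu' \<in> X" "h \<in> Gm" "s mu' = rG h" by (auto simp: Z_mor)
    have S: "act g1 mu' \<in> L \<and> res g1 mu' \<in> Gm \<and> r (act g1 mu') = rG g1 \<and> s (act g1 mu') = rG (res g1 mu') \<and>
        sG (res g1 mu') = s mu' \<and> d (act g1 mu') = d mu'" using ss1[OF g1(1) _ mh(2)] m' XL by auto
    have muX: "act g1 mu' \<in> X" using Xact g1 m' mh by auto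
    have "cp gam (act g1 mu') \<in> X" using Xcp gX muX S g1 by auto
    moreover have "cG (res g1 mu') h \<in> Gm \<and> rG (cG (res g1 mu') h) = rG (res g1 mu')" using G_comp S m' by auto
    moreover have "s (cp gam (act g1 mu')) = s (act g1 mu')" using L_comp S XL gX g1 by auto
    ultimately show "z \<in> {(lam, g). (lam, g) \<in> cat_mor (Z X) \<and> (\<exists>mu\<in>X. s gam = r mu \<and> lam = cp gam mu)}"
      using z muX S g1 by (auto simp: Z_mor intro!: bexI[of _ "act g1 mu'"])
  }
  {
    assume "z \<in> {(lam, g). (lam, g) \<in> cat_mor (Z X) \<and> (\<exists>mu\<in>X. s gam = r mu \<and> lam = cp gam mu)}"
    then obtain lam g mu where z: "z = (lam, g)" and lg: "lam \<in> X" "g \<in> Gm" "s lam = rG g"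
      and mu: "mu \<in> X" "s gam = r mu" "lam = cp gam mu" by (auto simp: Z_mor)
    have muL: "mu \<in> L" using mu XL by auto
    obtain g' where g': "g' \<in> Gm" "sG g1 = rG g'" "sG g' = rG g1" "cG g1 g' = iG (rG g1)" "cG g' g1 = iG (sG g1)"
      using G_inv[OF g1(1)] by blast
    define mu' where "mu' = act g' mu"
    have S': "act g' mu \<in> L \<and> res g' mu \<in> Gm \<and> r (act g' mu) = rG g'" using ss1[OF g'(1) muL] g' g1 mu by auto
    have m'X: "mu' \<in> X" unfolding mu'_def using Xact g' mu g1 by auto
    have m'L: "mu' \<in> L" using S' mu'_def by simp
    have rm': "r mu' = sG g1" using S' g' mu'_def by simp
    have am: "act g1 mu' = mu"
    proof -
      have "act g1 mu' = act (cG g1 g') mu" unfolding mu'_def using ss4[OF g1(1) g'(1) muL] g' g1 mu by auto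
      also have "\<dots> = act (iG (r mu)) mu" using g' g1 mu by simp
      finally show ?thesis using ss2[OF muL] by simp
    qed
    define q where "q = res g1 mu'"
    have Sq: "q \<in> Gm" "sG q = s mu'" "rG q = s mu" using ss1[OF g1(1) m'L rm'[symmetric]] am q_def by auto
    obtain q' where q': "q' \<in> Gm" "sG q = rG q'" "sG q' = rG q" "cG q q' = iG (rG q)" "cG q' q = iG (sG q)"
      using G_inv[OF Sq(1)] by blast
    have slam: "s lam = s mu" using L_comp[of gam mu] mu muL XL gX by auto
    define h where "h = cG q' g"
    have hG: "h \<in> Gm" "rG h = rG q'" using G_comp q' lg Sq slam h_def by auto
    have "cG q h = g"
    proof -
      have "cG q h = cG (cG q q') g" unfolding h_def using G_assoc[of q q' g] q' lg Sq slam by simp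
      also have "\<dots> = g" using q' Sq lg slam G_unit[of g] by auto
      finally show ?thesis .
    qed
    then have "cat_comp (Z X) (gam, g1) (mu', h) = z" using z am mu q_def by simp
    moreover have "(mu', h) \<in> cat_mor (Z X)" using m'X hG q' Sq by (auto simp: Z_mor)
    ultimately show "z \<in> right_ideal (Z X) (gam, g1)" unfolding right_ideal_def using rm' by force
  }
qed


abbreviation "Gam \<equiv> gamma_part k \<Lambda> d"

lemma Gam_def': "Gam = {lam \<in> L. d lam k = 0}" by (simp add: gamma_part_def)

lemma closed_L: "closedX L"
  unfolding closedX_def using ss1 L_comp by auto

lemma closed_Gam: "closedX Gam"
  unfolding closedX_def Gam_def' using ss1 L_comp d_comp by auto

lemma id_Gam: "v \<in> cat_obj \<Lambda> \<Longrightarrow> iL v \<in> Gam"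
  using L_id d_id by (simp add: Gam_def')

lemma ZG_sub: "cat_mor (Z Gam) \<subseteq> cat_mor (Z L)"
  by (auto simp: Z_mor Gam_def')

lemma char_L: "(gam, g1) \<in> cat_mor (Z L) \<Longrightarrow> right_ideal (Z L) (gam, g1) =
     {(lam, g). (lam, g) \<in> cat_mor (Z L) \<and> (\<exists>mu\<in>L. s gam = r mu \<and> lam = cp gam mu)}"
  using char_ideal[OF closed_L] by blast
lemma char_G: "(gam, g1) \<in> cat_mor (Z Gam) \<Longrightarrow> right_ideal (Z Gam) (gam, g1) =
     {(lam, g). (lam, g) \<in> cat_mor (Z Gam) \<and> (\<exists>mu\<in>Gam. s gam = r mu \<and> lam = cp gam mu)}"
  using char_ideal[OF closed_Gam] by blast

lemma ideal_restrict:
  assumes a: "a \<in> cat_mor (Z Gam)"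
  shows "right_ideal (Z Gam) a = right_ideal (Z L) a \<inter> cat_mor (Z Gam)"
proof -
  obtain gam g1 where ag: "a = (gam, g1)" by (cases a)
  have aL: "a \<in> cat_mor (Z L)" using a ZG_sub by auto
  have gG: "gam \<in> Gam" using a ag by (auto simp: Z_mor)
  have "\<And>lam mu. lam \<in> Gam \<Longrightarrow> mu \<in> L \<Longrightarrow> s gam = r mu \<Longrightarrow> lam = cp gam mu \<Longrightarrow> mu \<in> Gam"
  proof -
    fix lam mu assume "lam \<in> Gam" "mu \<in> L" "s gam = r mu" "lam = cp gam mu"
    then have "d lam k = d gam k + d mu k" using d_comp gG by (auto simp: Gam_def')
    then show "mu \<in> Gam" using \<open>lam \<in> Gam\<close> \<open>mu \<in> L\<close> by (simp add: Gam_def')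
  qed
  then show ?thesis
    unfolding ag char_G[OF a[unfolded ag]] char_L[OF aL[unfolded ag]]
    using ZG_sub by (auto simp: Gam_def' Z_mor)
qed

lemma self_ideal_L: "a \<in> cat_mor (Z L) \<Longrightarrow> a \<in> right_ideal (Z L) a"
proof -
  assume a: "a \<in> cat_mor (Z L)"
  obtain gam g1 where ag: "a = (gam, g1)" by (cases a)
  have gl: "gam \<in> L" using a ag by (auto simp: Z_mor)
  show ?thesis unfolding ag char_L[OF a[unfolded ag]] using a ag gl L_id[OF L_rs[OF gl, THEN conjunct2]] L_unit[OF gl]
    by (auto intro!: bexI[of _ "iL (s gam)"])
qed

lemma self_ideal_G: "a \<in> cat_mor (Z Gam) \<Longrightarrow> a \<in> right_ideal (Z Gam) a"
proof -
  assume a: "a \<in> cat_mor (Z Gam)"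
  have "a \<in> cat_mor (Z L)" using a ZG_sub by blast
  then have "a \<in> right_ideal (Z L) a" by (rule self_ideal_L)
  then show ?thesis using ideal_restrict[OF a] a by auto
qed

lemma ideal_trans_L:
  assumes b: "b \<in> right_ideal (Z L) a" and a: "a \<in> cat_mor (Z L)"
  shows "right_ideal (Z L) b \<subseteq> right_ideal (Z L) a"
proof -
  obtain la ga where ag: "a = (la, ga)" by (cases a)
  obtain lb gb where bg: "b = (lb, gb)" by (cases b)
  from b a have bm: "b \<in> cat_mor (Z L)" and mu: "\<exists>mu\<in>L. s la = r mu \<and> lb = cp la mu"
    unfolding ag bg char_L[OF a[unfolded ag]] by auto
  then obtain mu where mu: "mu \<in> L" "s la = r mu" "lb = cp la mu" by blast
  have la: "la \<in> L" using a ag by (auto simp: Z_mor)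
  show ?thesis
  proof
    fix z assume z: "z \<in> right_ideal (Z L) b"
    obtain lz gz where zg: "z = (lz, gz)" by (cases z)
    from z have zm: "z \<in> cat_mor (Z L)" and "\<exists>nu\<in>L. s lb = r nu \<and> lz = cp lb nu"
      unfolding zg bg char_L[OF bm[unfolded bg]] by auto
    then obtain nu where nu: "nu \<in> L" "s lb = r nu" "lz = cp lb nu" by blast
    have "s mu = r nu" using nu mu L_comp la by auto
    then have "lz = cp la (cp mu nu) \<and> cp mu nu \<in> L \<and> r (cp mu nu) = r mu"
      using nu mu L_assoc la L_comp by auto
    then show "z \<in> right_ideal (Z L) a" unfolding ag char_L[OF a[unfolded ag]] using zm zg mu by (auto intro!: bexI[of _ "cp mu nu"])
  qed
qed

definition zk :: "(nat \<Rightarrow> nat) \<Rightarrow> nat \<Rightarrow> nat" where "zk m = (\<lambda>i. if i = k then 0 else m i)"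
definition ok :: "(nat \<Rightarrow> nat) \<Rightarrow> nat \<Rightarrow> nat" where "ok m = (\<lambda>i. if i = k then m k else 0)"

lemma zk_ok: "m = (\<lambda>i. zk m i + ok m i)" by (auto simp: zk_def ok_def)

lemma split_Gam:
  assumes gam: "gam \<in> Gam" and mu: "mu \<in> L" "s gam = r mu"
    and ab: "al \<in> L" "be \<in> L" "s al = r be" "d al = zk (d (cp gam mu))" "d be = ok (d (cp gam mu))" "cp al be = cp gam mu"
  shows "\<exists>nu\<in>Gam. s gam = r nu \<and> al = cp gam nu"
proof -
  have gL: "gam \<in> L" and g0: "d gam k = 0" using gam by (auto simp: Gam_def')
  obtain nu rho where nr: "nu \<in> L" "rho \<in> L" "s nu = r rho" "d nu = zk (d mu)" "d rho = ok (d mu)" "cp nu rho = mu"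
    using fact_ex[OF mu(1) zk_ok] by blast
  have dl: "d (cp gam mu) = (\<lambda>i. d gam i + d mu i)" using d_comp gL mu by auto
  have rn: "r nu = r mu" using L_comp nr by metis
  have cgn: "cp gam nu \<in> L" "s (cp gam nu) = s nu" using L_comp gL nr rn mu by auto
  have eq: "cp (cp gam nu) rho = cp gam mu" using L_assoc[of gam nu rho] gL nr rn mu by auto
  have d1: "d (cp gam nu) = zk (d (cp gam mu))"
    using d_comp[of gam nu] gL nr rn mu g0 by (auto simp: dl zk_def)
  have d2: "d rho = ok (d (cp gam mu))" using nr g0 by (auto simp: dl ok_def)
  have lamL: "cp gam mu \<in> L" using L_comp gL mu by auto
  have "al = cp gam nu"
    using fact_uniq[OF lamL zk_ok ab(1-6) cgn(1) nr(2) _ d1 d2 eq] cgn nr by auto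
  moreover have "nu \<in> Gam" using nr by (simp add: Gam_def' zk_def)
  ultimately show ?thesis using rn mu by (intro bexI[of _ nu]) auto
qed

lemma R3_transfer:
  assumes c1: "c1 \<in> cat_mor (Z Gam)" and c2: "c2 \<in> cat_mor (Z Gam)" and F: "F \<subseteq> cat_mor (Z Gam)"
    and eq: "right_ideal (Z Gam) c1 \<inter> right_ideal (Z Gam) c2 = set_ideal (Z Gam) F"
  shows "right_ideal (Z L) c1 \<inter> right_ideal (Z L) c2 = set_ideal (Z L) F"
proof (rule set_eqI, rule iffI)
  have c1L: "c1 \<in> cat_mor (Z L)" and c2L: "c2 \<in> cat_mor (Z L)" using c1 c2 ZG_sub by auto
  fix z
  {
    assume "z \<in> set_ideal (Z L) F"
    then obtain f where f: "f \<in> F" "z \<in> right_ideal (Z L) f" unfolding set_ideal_def by auto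
    have fG: "f \<in> cat_mor (Z Gam)" using F f by auto
    then have fL: "f \<in> cat_mor (Z L)" using ZG_sub by auto
    have "f \<in> set_ideal (Z Gam) F" unfolding set_ideal_def using self_ideal_G[OF fG] f by auto
    then have "f \<in> right_ideal (Z Gam) c1 \<and> f \<in> right_ideal (Z Gam) c2" using eq by auto
    then have "f \<in> right_ideal (Z L) c1 \<and> f \<in> right_ideal (Z L) c2"
      using ideal_restrict[OF c1] ideal_restrict[OF c2] by auto
    then show "z \<in> right_ideal (Z L) c1 \<inter> right_ideal (Z L) c2"
      using ideal_trans_L c1L c2L f by blast
  }
  {
    assume z: "z \<in> right_ideal (Z L) c1 \<inter> right_ideal (Z L) c2"
    obtain g1 h1 where c1g: "c1 = (g1, h1)" by (cases c1)
    obtain g2 h2 where c2g: "c2 = (g2, h2)" by (cases c2)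
    obtain lam g where zg: "z = (lam, g)" by (cases z)
    from z have zm: "z \<in> cat_mor (Z L)" and m1: "\<exists>mu\<in>L. s g1 = r mu \<and> lam = cp g1 mu"
      and m2: "\<exists>mu\<in>L. s g2 = r mu \<and> lam = cp g2 mu"
      unfolding zg c1g c2g char_L[OF c1L[unfolded c1g]] char_L[OF c2L[unfolded c2g]] by auto
    obtain mu1 where mu1: "mu1 \<in> L" "s g1 = r mu1" "lam = cp g1 mu1" using m1 by blast
    obtain mu2 where mu2: "mu2 \<in> L" "s g2 = r mu2" "lam = cp g2 mu2" using m2 by blast
    have lamL: "lam \<in> L" and gz: "g \<in> Gm" "s lam = rG g" using zm zg by (auto simp: Z_mor)
    obtain al be where ab: "al \<in> L" "be \<in> L" "s al = r be" "d al = zk (d lam)" "d be = ok (d lam)" "cp al be = lam"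
      using fact_ex[OF lamL zk_ok] by blast
    have g1G: "g1 \<in> Gam" using c1 c1g by (auto simp: Z_mor)
    have g2G: "g2 \<in> Gam" using c2 c2g by (auto simp: Z_mor)
    obtain nu1 where nu1: "nu1 \<in> Gam" "s g1 = r nu1" "al = cp g1 nu1"
      using split_Gam[OF g1G mu1(1,2)] ab mu1(3) by metis
    obtain nu2 where nu2: "nu2 \<in> Gam" "s g2 = r nu2" "al = cp g2 nu2"
      using split_Gam[OF g2G mu2(1,2)] ab mu2(3) by metis
    have alG: "al \<in> Gam" using ab by (simp add: Gam_def' zk_def)
    have sal: "s al \<in> cat_obj G" using L_rs[OF ab(1)] objs by simp
    have am: "(al, iG (s al)) \<in> cat_mor (Z Gam)" using alG G_id[OF sal] by (auto simp: Z_mor)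
    have "(al, iG (s al)) \<in> right_ideal (Z Gam) c1 \<inter> right_ideal (Z Gam) c2"
      unfolding c1g c2g char_G[OF c1[unfolded c1g]] char_G[OF c2[unfolded c2g]] using am nu1 nu2 by auto
    then obtain f where f: "f \<in> F" "(al, iG (s al)) \<in> right_ideal (Z Gam) f"
      using eq unfolding set_ideal_def by auto
    obtain ph hf where fg: "f = (ph, hf)" by (cases f)
    have fG: "f \<in> cat_mor (Z Gam)" using F f by auto
    then have fL: "f \<in> cat_mor (Z L)" using ZG_sub by auto
    from f obtain nu where nu: "nu \<in> Gam" "s ph = r nu" "al = cp ph nu"
      unfolding fg char_G[OF fG[unfolded fg]] by auto
    have phL: "ph \<in> L" using fG fg by (auto simp: Z_mor Gam_def')
    have nuL: "nu \<in> L" using nu by (simp add: Gam_def')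
    have "s nu = r be" using ab nu L_comp phL nuL by metis
    then have "lam = cp ph (cp nu be) \<and> cp nu be \<in> L \<and> r (cp nu be) = r nu"
      using L_assoc[of ph nu be] ab nu phL nuL L_comp by auto
    then have "z \<in> right_ideal (Z L) f" unfolding fg char_L[OF fL[unfolded fg]] using zm zg nu by (auto intro!: bexI[of _ "cp nu be"])
    then show "z \<in> set_ideal (Z L) F" unfolding set_ideal_def using f by auto
  }
qed

lemma indep_transfer:
  assumes F: "F \<subseteq> cat_mor (Z Gam)" and ind: "independent (Z Gam) F"
  shows "independent (Z L) F"
  unfolding independent_def
proof (intro ballI impI)
  fix a a' assume a: "a \<in> F" "a' \<in> F" "a \<noteq> a'"
  then have "a \<notin> right_ideal (Z Gam) a'" using ind unfolding independent_def by auto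
  then show "a \<notin> right_ideal (Z L) a'" using ideal_restrict[of a'] F a by auto
qed


lemma Z_same: "cat_r (Z X) = cat_r (Z Y)" "cat_s (Z X) = cat_s (Z Y)"
   "cat_comp (Z X) = cat_comp (Z Y)" "cat_id (Z X) = cat_id (Z Y)" "cat_obj (Z X) = cat_obj (Z Y)"
  by (simp_all add: zs_product_def)

lemma rep_restrict:
  assumes rep: "twisted_rep (Z L) \<sigma> S"
  shows "twisted_rep (Z Gam) \<sigma> S"
proof -
  note sub = ZG_sub
  have A: "\<forall>c\<in>cat_mor (Z L). partial_isometry (S c)"
   and B: "\<forall>c1\<in>cat_mor (Z L). \<forall>c2\<in>cat_mor (Z L). S c1 * S c2 =
        (if cat_s (Z L) c1 = cat_r (Z L) c2 then cscale (\<sigma> c1 c2) (S (cat_comp (Z L) c1 c2)) else 0)"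
   and C: "\<forall>c\<in>cat_mor (Z L). cadj (S c) * S c = S (cat_id (Z L) (cat_s (Z L) c))"
   and D: "\<forall>c1\<in>cat_mor (Z L). \<forall>c2\<in>cat_mor (Z L). \<forall>F. finite F \<longrightarrow> F \<subseteq> cat_mor (Z L) \<longrightarrow> independent (Z L) F \<longrightarrow>
        right_ideal (Z L) c1 \<inter> right_ideal (Z L) c2 = set_ideal (Z L) F \<longrightarrow>
        is_proj_sup {S c * cadj (S c) | c. c \<in> F} (S c1 * cadj (S c1) * S c2 * cadj (S c2))"
    using rep unfolding twisted_rep_def by blast+
  show ?thesis unfolding twisted_rep_def
  proof (intro conjI ballI allI impI)
    fix c assume "c \<in> cat_mor (Z Gam)" then show "partial_isometry (S c)" using A sub by blast
  next
    fix c1 c2 assume "c1 \<in> cat_mor (Z Gam)" "c2 \<in> cat_mor (Z Gam)"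
    then have "c1 \<in> cat_mor (Z L)" "c2 \<in> cat_mor (Z L)" using sub by blast+
    then show "S c1 * S c2 = (if cat_s (Z Gam) c1 = cat_r (Z Gam) c2 then cscale (\<sigma> c1 c2) (S (cat_comp (Z Gam) c1 c2)) else 0)"
      unfolding Z_same[of Gam L] using B by blast
  next
    fix c assume "c \<in> cat_mor (Z Gam)"
    then have "c \<in> cat_mor (Z L)" using sub by blast
    then show "cadj (S c) * S c = S (cat_id (Z Gam) (cat_s (Z Gam) c))"
      unfolding Z_same[of Gam L] using C by blast
  next
    fix c1 c2 F assume c: "c1 \<in> cat_mor (Z Gam)" "c2 \<in> cat_mor (Z Gam)" and F: "finite F" "F \<subseteq> cat_mor (Z Gam)"
      "independent (Z Gam) F" "right_ideal (Z Gam) c1 \<inter> right_ideal (Z Gam) c2 = set_ideal (Z Gam) F"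
    have "independent (Z L) F" using indep_transfer F by blast
    moreover have "right_ideal (Z L) c1 \<inter> right_ideal (Z L) c2 = set_ideal (Z L) F" using R3_transfer c F by blast
    ultimately show "is_proj_sup {S c * cadj (S c) | c. c \<in> F} (S c1 * cadj (S c1) * S c2 * cadj (S c2))"
      using D c F sub by blast
  qed
qed

lemma deg0_id: "be \<in> L \<Longrightarrow> d be = (\<lambda>i. 0) \<Longrightarrow> s be = r be"
proof -
  assume be: "be \<in> L" "d be = (\<lambda>i. 0)"
  have rs: "r be \<in> cat_obj \<Lambda>" "s be \<in> cat_obj \<Lambda>" using L_rs be by auto
  have "be = iL (r be) \<and> iL (s be) = be"
    apply (rule fact_uniq[of be "\<lambda>i. 0" "\<lambda>i. 0" be "iL (s be)" "iL (r be)" be])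
    using be L_id[OF rs(1)] L_id[OF rs(2)] d_id[OF rs(1)] d_id[OF rs(2)] L_unit[OF be(1)] by auto
  then have e: "be = iL (r be)" by blast
  have "s be = s (iL (r be))" using e by (rule arg_cong)
  also have "\<dots> = r be" using L_id[OF rs(1)] by blast
  finally show ?thesis .
qed

lemma edge_of_deg:
  assumes tau: "tau \<in> L" and pos: "d tau i > 0"
  shows "\<exists>e\<in>L. r e = r tau \<and> d e = unit_deg i"
proof -
  have dt: "d tau = (\<lambda>j. unit_deg i j + (d tau j - unit_deg i j))"
    using pos by (auto simp: unit_deg_def)
  obtain a b where ab: "a \<in> L" "b \<in> L" "s a = r b" "d a = unit_deg i" "cp a b = tau"
    using fact_ex[OF tau dt] by blast
  then have "r a = r tau" using L_comp[of a b] by simp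
  then show ?thesis using ab by blast
qed

lemma LC_path:
  assumes lc: "locally_convex (Suc k) \<Lambda> d" and i: "i < k"
  shows "be \<in> L \<Longrightarrow> d be k = n \<Longrightarrow> (\<forall>j. j \<noteq> k \<longrightarrow> d be j = 0) \<Longrightarrow>
    (\<exists>e\<in>L. r e = r be \<and> d e = unit_deg i) \<Longrightarrow> (\<exists>e\<in>L. r e = s be \<and> d e = unit_deg i)"
proof (induction n arbitrary: be)
  case 0
  have "d be = (\<lambda>i. 0)"
  proof (rule ext)
    fix j show "d be j = 0" using 0 by (cases "j = k") auto
  qed
  then show ?case using deg0_id[of be] 0 by simp
next
  case (Suc n)
  have db: "d be = (\<lambda>j. unit_deg k j + (if j = k then n else 0))"
    using Suc.prems by (auto simp: unit_deg_def)
  obtain e b where eb: "e \<in> L" "b \<in> L" "s e = r b" "d e = unit_deg k" "d b = (\<lambda>j. if j = k then n else 0)" "cp e b = be"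
    using fact_ex[OF Suc.prems(1) db] by blast
  have re: "r e = r be" "s be = s b" using L_comp[of e b] eb by auto
  have lcf: "\<forall>i<Suc k. \<forall>j<Suc k. i \<noteq> j \<longrightarrow>
     (\<forall>e\<in>L. d e = unit_deg i \<longrightarrow>
        (\<exists>f\<in>L. r f = r e \<and> d f = unit_deg j) \<longrightarrow>
        (\<exists>f\<in>L. r f = s e \<and> d f = unit_deg j))" using lc unfolding locally_convex_def .
  have ik: "k < Suc k" "i < Suc k" "k \<noteq> i" using i by auto
  have pre: "\<exists>f\<in>L. r f = r e \<and> d f = unit_deg i" using Suc.prems(4) re(1) by simp
  have "\<exists>f\<in>L. r f = s e \<and> d f = unit_deg i"
    using lcf[rule_format, OF ik(1) ik(2) ik(3) eb(1) eb(4) pre] .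
  moreover have "d b k = n" "\<forall>j. j \<noteq> k \<longrightarrow> d b j = 0" using eb(5) by auto
  ultimately have "\<exists>e\<in>L. r e = s b \<and> d e = unit_deg i" using Suc.IH[of b] eb(2,3) by simp
  then show ?case using re(2) by simp
qed

lemma path_exh:
  assumes lc: "locally_convex (Suc k) \<Lambda> d" and Ff: "finite F'" and FG: "F' \<subseteq> Gam"
    and H: "\<forall>rho'\<in>Gam. r rho' = v \<longrightarrow> (\<exists>ph\<in>F'. \<exists>tau\<in>Gam. \<exists>tau'\<in>Gam. s rho' = r tau \<and> s ph = r tau' \<and> cp rho' tau = cp ph tau')"
    and lam: "lam \<in> L" "r lam = v"
  shows "\<exists>rho\<in>L. \<exists>ph\<in>F'. \<exists>sg\<in>L. s lam = r rho \<and> s ph = r sg \<and> cp lam rho = cp ph sg"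
proof -
  define N where "N = (\<lambda>i. \<Sum>ph\<in>F'. d ph i)"
  define P where "P = (\<lambda>rho. rho \<in> Gam \<and> r rho = s lam \<and> (\<forall>i. d rho i \<le> N i))"
  define sm where "sm = (\<lambda>rho. \<Sum>i<k. d rho i)"
  have slo: "s lam \<in> cat_obj \<Lambda>" using L_rs lam by auto
  have P0: "P (iL (s lam))" unfolding P_def using id_Gam[OF slo] L_id[OF slo] d_id[OF slo] by auto
  have bnd: "\<forall>y. P y \<longrightarrow> sm y < Suc (\<Sum>i<k. N i)"
  proof (intro allI impI)
    fix y assume "P y"
    then have "sm y \<le> (\<Sum>i<k. N i)" unfolding sm_def P_def by (intro sum_mono) auto
    then show "sm y < Suc (\<Sum>i<k. N i)" by simp
  qed
  obtain rho where Prho: "P rho" and mx: "\<forall>y. P y \<longrightarrow> sm y \<le> sm rho"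
    using ex_has_greatest_nat[of P _ sm, OF P0 bnd] by blast
  have rhoG: "rho \<in> Gam" and rhoL: "rho \<in> L" and rr: "r rho = s lam" and rN: "\<And>i. d rho i \<le> N i"
    using Prho unfolding P_def by (auto simp: Gam_def')
  have M: "\<And>i. i < k \<Longrightarrow> d rho i < N i \<Longrightarrow> \<not> (\<exists>e\<in>L. r e = s rho \<and> d e = unit_deg i)"
  proof
    fix i assume i: "i < k" "d rho i < N i" and "\<exists>e\<in>L. r e = s rho \<and> d e = unit_deg i"
    then obtain e where e: "e \<in> L" "r e = s rho" "d e = unit_deg i" by blast
    define rho1 where "rho1 = cp rho e"
    have d1: "d rho1 = (\<lambda>j. d rho j + unit_deg i j)" using d_comp rhoL e rho1_def by auto
    have "rho1 \<in> L" "r rho1 = r rho" using L_comp rhoL e rho1_def by auto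
    moreover have "d rho1 k = 0" using d1 i rhoG by (auto simp: unit_deg_def Gam_def')
    moreover have "\<forall>j. d rho1 j \<le> N j"
    proof
      fix j show "d rho1 j \<le> N j" using d1 rN[of j] i by (cases "j = i") (auto simp: unit_deg_def)
    qed
    ultimately have "P rho1" unfolding P_def using rr by (simp add: Gam_def')
    then have "sm rho1 \<le> sm rho" using mx by blast
    moreover have "sm rho1 = sm rho + 1"
    proof -
      have "sm rho1 = (\<Sum>j<k. d rho j + unit_deg i j)" unfolding sm_def d1 by simp
      also have "\<dots> = sm rho + (\<Sum>j<k. unit_deg i j)" unfolding sm_def by (simp add: sum.distrib)
      also have "(\<Sum>j<k. unit_deg i j) = 1" using i unfolding unit_deg_def by (simp add: sum.delta)
      finally show ?thesis .
    qed
    ultimately show False by simp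
  qed
  define x where "x = cp lam rho"
  have xL: "x \<in> L" "r x = v" "s x = s rho" using L_comp[OF lam(1) rhoL rr[symmetric]] lam(2) unfolding x_def by auto
  have dx: "d x = (\<lambda>i. d lam i + d rho i)" using d_comp[OF lam(1) rhoL rr[symmetric]] unfolding x_def .
  obtain rp bp where rb: "rp \<in> L" "bp \<in> L" "s rp = r bp" "d rp = zk (d x)" "d bp = ok (d x)" "cp rp bp = x"
    using fact_ex[OF xL(1) zk_ok] by blast
  have rpG: "rp \<in> Gam" using rb by (simp add: Gam_def' zk_def)
  have rrp: "r rp = v" and sbp: "s bp = s rho" using L_comp[of rp bp] rb xL by auto
  obtain ph tau tau' where ph: "ph \<in> F'" "tau \<in> Gam" "tau' \<in> Gam" "s rp = r tau" "s ph = r tau'" "cp rp tau = cp ph tau'"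
    using H[rule_format, OF rpG rrp] by blast
  have phG: "ph \<in> Gam" using ph FG by auto
  have phL: "ph \<in> L" "d ph k = 0" using phG by (auto simp: Gam_def')
  have tL: "tau \<in> L" "tau' \<in> L" using ph by (auto simp: Gam_def')
  have dy1: "d (cp rp tau) = (\<lambda>i. d rp i + d tau i)" using d_comp[OF rb(1) tL(1) ph(4)] .
  have dy2: "d (cp ph tau') = (\<lambda>i. d ph i + d tau' i)" using d_comp[OF phL(1) tL(2) ph(5)] .
  have eqi: "\<And>i. d rp i + d tau i = d ph i + d tau' i"
  proof -
    fix i
    have "d (cp rp tau) i = d (cp ph tau') i" using ph(6) by simp
    then show "d rp i + d tau i = d ph i + d tau' i" using dy1 dy2 by simp
  qed
  have le: "\<And>i. d ph i \<le> d rp i"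
  proof -
    fix i
    show "d ph i \<le> d rp i"
    proof (cases "i < k")
      case False
      then show ?thesis using phL d_high[OF phL(1)] by (cases "i = k") auto
    next
      case True
      show ?thesis
      proof (cases "N i \<le> d rp i")
        case True
        have "d ph i \<le> N i" unfolding N_def using Ff ph(1) by (intro member_le_sum) auto
        then show ?thesis using True by simp
      next
        case False
        have drp: "d rp i = d lam i + d rho i" using rb(4) dx \<open>i < k\<close> by (simp add: zk_def)
        then have "d rho i < N i" using False by simp
        then have noe: "\<not> (\<exists>e\<in>L. r e = s bp \<and> d e = unit_deg i)" using M \<open>i < k\<close> sbp by simp
        have "\<not> (\<exists>e\<in>L. r e = r bp \<and> d e = unit_deg i)"
          using LC_path[OF lc \<open>i < k\<close> rb(2) refl] rb(5) noe by (auto simp: ok_def)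
        then have "d tau i = 0" using edge_of_deg[OF tL(1), of i] ph(4) rb(3) by (cases "d tau i") auto
        then show ?thesis using eqi[of i] by simp
      qed
    qed
  qed
  have drp: "d rp = (\<lambda>i. d ph i + (d rp i - d ph i))" using le by (auto simp: fun_eq_iff)
  obtain a b where ab: "a \<in> L" "b \<in> L" "s a = r b" "d a = d ph" "d b = (\<lambda>i. d rp i - d ph i)" "cp a b = rp"
    using fact_ex[OF rb(1) drp] by blast
  have Lab: "cp a b \<in> L \<and> r (cp a b) = r a \<and> s (cp a b) = s b" using L_comp[OF ab(1) ab(2) ab(3)] .
  have sb: "s b = s rp" using Lab ab(6) by simp
  have sbt: "s b = r tau" using sb ph(4) by simp
  have sbbp: "s b = r bp" using sb rb(3) by simp
  have Lbt: "cp b tau \<in> L \<and> r (cp b tau) = r b \<and> s (cp b tau) = s tau" using L_comp[OF ab(2) tL(1) sbt] .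
  have bt: "cp b tau \<in> L" "s a = r (cp b tau)" using Lbt ab(3) by auto
  have eq1: "cp a (cp b tau) = cp rp tau" using L_assoc[OF ab(1) ab(2) tL(1) ab(3) sbt] ab(6) by simp
  have yL: "cp rp tau \<in> L" using L_comp[OF rb(1) tL(1) ph(4)] by blast
  have dbt: "d (cp b tau) = d tau'"
  proof (rule ext)
    fix i
    have h: "d (cp b tau) = (\<lambda>i. d b i + d tau i)" using d_comp[OF ab(2) tL(1) sbt] .
    show "d (cp b tau) i = d tau' i" using h eqi[of i] le[of i] ab(5) by simp
  qed
  have dy: "d (cp rp tau) = (\<lambda>i. d ph i + d tau' i)" using dy2 ph(6) by simp
  have "a = ph"
    using fact_uniq[OF yL dy ab(1) bt(1) bt(2) ab(4) dbt eq1 phL(1) tL(2) ph(5) refl refl ph(6)[symmetric]] by blast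
  have "x = cp (cp a b) bp" using rb(6) ab(6) by simp
  also have "\<dots> = cp a (cp b bp)" using L_assoc[OF ab(1) ab(2) rb(2) ab(3) sbbp] .
  finally have fin: "cp lam rho = cp ph (cp b bp)" using \<open>a = ph\<close> x_def by simp
  have Lbb: "cp b bp \<in> L \<and> r (cp b bp) = r b \<and> s (cp b bp) = s bp" using L_comp[OF ab(2) rb(2) sbbp] .
  have r2: "s ph = r (cp b bp)" using Lbb ab(3) \<open>a = ph\<close> by simp
  have "s lam = r rho" using rr by simp
  then show ?thesis using rhoL ph(1) Lbb r2 fin by blast
qed

lemma exh_transfer:
  assumes lc: "locally_convex (Suc k) \<Lambda> d" and v: "v \<in> cat_obj \<Lambda>" and F: "finite F"
    and ex: "exhaustive (Z Gam) v F"
  shows "exhaustive (Z L) v F"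
proof -
  have F1: "F \<subseteq> right_ideal (Z Gam) (cat_id (Z Gam) v)"
   and F2: "\<forall>c\<in>right_ideal (Z Gam) (cat_id (Z Gam) v). right_ideal (Z Gam) c \<inter> set_ideal (Z Gam) F \<noteq> {}"
    using ex unfolding exhaustive_def by blast+
  have vG: "v \<in> cat_obj G" using v objs by simp
  have idG: "(iL v, iG v) \<in> cat_mor (Z Gam)" using id_Gam[OF v] G_id[OF vG] L_id[OF v] by (simp add: Z_mor)
  have idL: "(iL v, iG v) \<in> cat_mor (Z L)" using idG ZG_sub by blast
  have FZ: "F \<subseteq> cat_mor (Z Gam)" using F1 char_G[OF idG] by auto
  have A: "F \<subseteq> right_ideal (Z L) (cat_id (Z L) v)" using F1 ideal_restrict[OF idG] by auto
  define F' where "F' = fst ` F"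
  have Ff: "finite F'" using F F'_def by simp
  have FG: "F' \<subseteq> Gam" using FZ F'_def by (auto simp: Z_mor)
  have H: "\<forall>rho'\<in>Gam. r rho' = v \<longrightarrow> (\<exists>ph\<in>F'. \<exists>tau\<in>Gam. \<exists>tau'\<in>Gam. s rho' = r tau \<and> s ph = r tau' \<and> cp rho' tau = cp ph tau')"
  proof (intro ballI impI)
    fix rho' assume rG: "rho' \<in> Gam" and rv: "r rho' = v"
    have rL: "rho' \<in> L" using rG by (simp add: Gam_def')
    have so: "s rho' \<in> cat_obj G" using L_rs[OF rL] objs by simp
    have cm: "(rho', iG (s rho')) \<in> cat_mor (Z Gam)" using rG G_id[OF so] by (simp add: Z_mor)
    have "rho' = cp (iL v) rho'" using L_unit[OF rL] rv by simp
    then have "(rho', iG (s rho')) \<in> right_ideal (Z Gam) (iL v, iG v)"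
      unfolding char_G[OF idG] using cm rG L_id[OF v] rv by auto
    then have "right_ideal (Z Gam) (rho', iG (s rho')) \<inter> set_ideal (Z Gam) F \<noteq> {}" using F2 by simp
    then obtain z where z1: "z \<in> right_ideal (Z Gam) (rho', iG (s rho'))" and z2: "z \<in> set_ideal (Z Gam) F" by blast
    obtain lz gz where zg: "z = (lz, gz)" by (cases z)
    from z1 obtain tau where tau: "tau \<in> Gam" "s rho' = r tau" "lz = cp rho' tau"
      unfolding zg char_G[OF cm] by auto
    from z2 obtain f where f: "f \<in> F" "z \<in> right_ideal (Z Gam) f" unfolding set_ideal_def by auto
    obtain ph hf where fg: "f = (ph, hf)" by (cases f)
    have fm: "(ph, hf) \<in> cat_mor (Z Gam)" using f FZ fg by auto
    from f(2) obtain tau' where tau': "tau' \<in> Gam" "s ph = r tau'" "lz = cp ph tau'"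
      unfolding zg fg char_G[OF fm] by auto
    have "ph \<in> F'" using f fg F'_def by force
    then show "\<exists>ph\<in>F'. \<exists>tau\<in>Gam. \<exists>tau'\<in>Gam. s rho' = r tau \<and> s ph = r tau' \<and> cp rho' tau = cp ph tau'"
      using tau tau' by (intro bexI[of _ ph] bexI[of _ tau] bexI[of _ tau']) auto
  qed
  have B: "\<forall>c\<in>right_ideal (Z L) (cat_id (Z L) v). right_ideal (Z L) c \<inter> set_ideal (Z L) F \<noteq> {}"
  proof
    fix c assume c: "c \<in> right_ideal (Z L) (cat_id (Z L) v)"
    obtain lam g where cg: "c = (lam, g)" by (cases c)
    from c have cm: "c \<in> cat_mor (Z L)" and "\<exists>mu\<in>L. s (iL v) = r mu \<and> lam = cp (iL v) mu"
      unfolding cg Z_id char_L[OF idL] by auto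
    then obtain mu where mu: "mu \<in> L" "s (iL v) = r mu" "lam = cp (iL v) mu" by blast
    have cl: "cp (iL v) mu \<in> L \<and> r (cp (iL v) mu) = r (iL v) \<and> s (cp (iL v) mu) = s mu"
      using L_comp[OF conjunct1[OF L_id[OF v]] mu(1,2)] .
    have lamL: "lam \<in> L" and rl: "r lam = v" using cl mu(3) L_id[OF v] by auto
    obtain rho ph sg where ps: "rho \<in> L" "ph \<in> F'" "sg \<in> L" "s lam = r rho" "s ph = r sg" "cp lam rho = cp ph sg"
      using path_exh[OF lc Ff FG H lamL rl] by blast
    obtain f where f: "f \<in> F" "fst f = ph" using ps(2) F'_def by auto
    obtain hf where fg: "f = (ph, hf)" using f(2) by (cases f) auto
    have "(ph, hf) \<in> F" using f(1) fg by simp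
    then have fm: "(ph, hf) \<in> cat_mor (Z L)" using FZ ZG_sub by blast
    have wL: "cp lam rho \<in> L" "s (cp lam rho) = s rho" using L_comp[OF lamL ps(1) ps(4)] by auto
    have so: "s (cp lam rho) \<in> cat_obj G" using L_rs[OF wL(1)] objs by simp
    define w where "w = (cp lam rho, iG (s (cp lam rho)))"
    have wm: "w \<in> cat_mor (Z L)" unfolding w_def using wL(1) G_id[OF so] by (simp add: Z_mor)
    have "w \<in> right_ideal (Z L) (lam, g)" unfolding char_L[OF cm[unfolded cg]] w_def
      using wm[unfolded w_def] ps(1,4) by (simp only: mem_Collect_eq case_prod_conv) blast
    moreover have "w \<in> right_ideal (Z L) (ph, hf)" unfolding char_L[OF fm] w_def
      using wm[unfolded w_def] ps(3,5,6) by (simp only: mem_Collect_eq case_prod_conv) blast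
    then have "w \<in> set_ideal (Z L) F" unfolding set_ideal_def using \<open>(ph, hf) \<in> F\<close> by blast
    ultimately show "right_ideal (Z L) c \<inter> set_ideal (Z L) F \<noteq> {}" using cg by blast
  qed
  show ?thesis unfolding exhaustive_def using A B by blast
qed

lemma cov_restrict:
  assumes lc: "locally_convex (Suc k) \<Lambda> d" and rep: "covariant_twisted_rep (Z L) \<sigma> S"
  shows "covariant_twisted_rep (Z Gam) \<sigma> S"
proof -
  have "twisted_rep (Z Gam) \<sigma> S" using rep rep_restrict unfolding covariant_twisted_rep_def by blast
  moreover have "\<forall>v\<in>cat_obj (Z Gam). \<forall>F. finite F \<longrightarrow> exhaustive (Z Gam) v F \<longrightarrow>
        is_proj_sup {S c * cadj (S c) | c. c \<in> F} (S (cat_id (Z Gam) v))"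
  proof (intro ballI allI impI)
    fix v F assume "v \<in> cat_obj (Z Gam)" "finite F" "exhaustive (Z Gam) v F"
    then have "v \<in> cat_obj (Z L)" "exhaustive (Z L) v F" using exh_transfer[OF lc] by auto
    then show "is_proj_sup {S c * cadj (S c) | c. c \<in> F} (S (cat_id (Z Gam) v))"
      unfolding Z_same(4)[of Gam L] using rep \<open>finite F\<close> unfolding covariant_twisted_rep_def by blast
  qed
  ultimately show ?thesis unfolding covariant_twisted_rep_def by blast
qed

end

theorem theorem3p20:
  fixes k :: nat
    and \<Lambda> :: "('o, 'l) cat" and d :: "'l \<Rightarrow> nat \<Rightarrow> nat"
    and G :: "('o, 'g) cat"
    and act :: "'g \<Rightarrow> 'l \<Rightarrow> 'l" and res :: "'g \<Rightarrow> 'l \<Rightarrow> 'g"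
    and \<sigma> :: "'l \<times> 'g \<Rightarrow> 'l \<times> 'g \<Rightarrow> complex"
    and tG :: "'l \<times> 'g \<Rightarrow> 'a::cstar_algebra" and tL :: "'l \<times> 'g \<Rightarrow> 'b::cstar_algebra"
    and sG :: "'l \<times> 'g \<Rightarrow> 'c::cstar_algebra" and sL :: "'l \<times> 'g \<Rightarrow> 'e::cstar_algebra"
  assumes kgraph: "is_kgraph (Suc k) \<Lambda> d"
    and fin_al: "finitely_aligned \<Lambda>"
    and grpd: "is_groupoid G"
    and objs: "cat_obj G = cat_obj \<Lambda>"
    and ss: "self_similar \<Lambda> G d act res"
    and cocycle: "two_cocycle (zs_product \<Lambda> G act res (cat_mor \<Lambda>)) \<sigma>"
    and univ_tG: "universal_toeplitz TYPE('b) (zs_product \<Lambda> G act res (gamma_part k \<Lambda> d)) \<sigma> tG"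
    and univ_tL: "universal_toeplitz TYPE('a) (zs_product \<Lambda> G act res (cat_mor \<Lambda>)) \<sigma> tL"
  shows "(\<exists>!\<Phi> :: 'a \<Rightarrow> 'b. star_hom \<Phi> \<and>
            (\<forall>x\<in>cat_mor (zs_product \<Lambda> G act res (gamma_part k \<Lambda> d)). \<Phi> (tG x) = tL x)) \<and>
         (locally_convex (Suc k) \<Lambda> d \<longrightarrow>
          universal_covariant TYPE('e) (zs_product \<Lambda> G act res (gamma_part k \<Lambda> d)) \<sigma> sG \<longrightarrow>
          universal_covariant TYPE('c) (zs_product \<Lambda> G act res (cat_mor \<Lambda>)) \<sigma> sL \<longrightarrow>
          (\<exists>\<Phi>b :: 'c \<Rightarrow> 'e. star_hom \<Phi>b \<and>
            (\<forall>x\<in>cat_mor (zs_product \<Lambda> G act res (gamma_part k \<Lambda> d)). \<Phi>b (sG x) = sL x)))"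
proof -
  interpret ssg k \<Lambda> d G act res using kgraph grpd objs ss by unfold_locales
  have P1: "\<exists>!\<Phi> :: 'a \<Rightarrow> 'b. star_hom \<Phi> \<and>
            (\<forall>x\<in>cat_mor (zs_product \<Lambda> G act res (gamma_part k \<Lambda> d)). \<Phi> (tG x) = tL x)"
  proof -
    have "twisted_rep (Z L) \<sigma> tL" using univ_tL unfolding universal_toeplitz_def by blast
    then have "twisted_rep (Z Gam) \<sigma> tL" by (rule rep_restrict)
    then show ?thesis using univ_tG unfolding universal_toeplitz_def by blast
  qed
  have P2: "locally_convex (Suc k) \<Lambda> d \<longrightarrow>
          universal_covariant TYPE('e) (zs_product \<Lambda> G act res (gamma_part k \<Lambda> d)) \<sigma> sG \<longrightarrow>
          universal_covariant TYPE('c) (zs_product \<Lambda> G act res (cat_mor \<Lambda>)) \<sigma> sL \<longrightarrow>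
          (\<exists>\<Phi>b :: 'c \<Rightarrow> 'e. star_hom \<Phi>b \<and>
            (\<forall>x\<in>cat_mor (zs_product \<Lambda> G act res (gamma_part k \<Lambda> d)). \<Phi>b (sG x) = sL x))"
  proof (intro impI)
    assume lc: "locally_convex (Suc k) \<Lambda> d"
      and uG: "universal_covariant TYPE('e) (zs_product \<Lambda> G act res (gamma_part k \<Lambda> d)) \<sigma> sG"
      and uL: "universal_covariant TYPE('c) (zs_product \<Lambda> G act res (cat_mor \<Lambda>)) \<sigma> sL"
    have "covariant_twisted_rep (Z L) \<sigma> sL" using uL unfolding universal_covariant_def by blast
    then have "covariant_twisted_rep (Z Gam) \<sigma> sL" by (rule cov_restrict[OF lc])
    then show "\<exists>\<Phi>b :: 'c \<Rightarrow> 'e. star_hom \<Phi>b \<and>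
            (\<forall>x\<in>cat_mor (zs_product \<Lambda> G act res (gamma_part k \<Lambda> d)). \<Phi>b (sG x) = sL x)"
      using uG unfolding universal_covariant_def by blast
  qed
  show ?thesis using P1 P2 by blast
qed

end
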